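(* For every integer $n>1$, $$\delta_C(n,0) \geqslant \frac{4 - 2\sin(\pi/n)}{2\sin(\pi/n)} \geqslant \frac{2n}{\pi} - 1.$$
   Context: For a graph $G$ whose vertices are points in $\mathbb{R}^D$, each edge $(u,v)$ has weight equal to the Euclidean distance $d(u,v)$, and $d_G(u,v)$ is the length of a shortest path in $G$ between $u$ and $v$. The dilation of $G$ is $\Delta(G)=\max_{u\neq v\in V(G)} d_G(u,v)/d(u,v)$ (infinite if $G$ is disconnected). For a finite set $S$ of $n$ points and an integer $k\ge 0$, $\Delta(S,k)$ is the minimum of $\Delta(G)$ over all graphs $G$ with vertex set exactly $S$ and exactly $n-1+k$ edges. $\delta_C(n,k)$ is the supremum of $\Delta(S,k)$ over all sets $S$ of $n$ points in $\mathbb{R}^2$ in convex position (all points lie on the boundary of their convex hull). *)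

theory Defs
  imports "HOL-Analysis.Analysis" "HOL-Library.Extended_Real"
begin

type_synonym point = "real^2"

definition graph_edges :: "point set \<Rightarrow> point set set \<Rightarrow> bool" where
  "graph_edges S E \<longleftrightarrow> E \<subseteq> {{u, v} | u v. u \<in> S \<and> v \<in> S \<and> u \<noteq> v}"

definition is_walk :: "point set set \<Rightarrow> point \<Rightarrow> point \<Rightarrow> point list \<Rightarrow> bool" where
  "is_walk E u v xs \<longleftrightarrow> xs \<noteq> [] \<and> hd xs = u \<and> last xs = v \<and>
     (\<forall>i < length xs - 1. {xs ! i, xs ! Suc i} \<in> E)"

definition walk_length :: "point list \<Rightarrow> real" where
  "walk_length xs = (\<Sum>i < length xs - 1. dist (xs ! i) (xs ! Suc i))"

text \<open>Shortest-path distance (infinite if no path).\<close>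
definition graph_dist :: "point set set \<Rightarrow> point \<Rightarrow> point \<Rightarrow> ereal" where
  "graph_dist E u v = Inf {ereal (walk_length xs) | xs. is_walk E u v xs}"

definition dilation :: "point set \<Rightarrow> point set set \<Rightarrow> ereal" where
  "dilation S E = Sup {graph_dist E u v / ereal (dist u v) | u v. u \<in> S \<and> v \<in> S \<and> u \<noteq> v}"

definition min_dilation :: "point set \<Rightarrow> nat \<Rightarrow> ereal" where
  "min_dilation S k = Inf {dilation S E | E. graph_edges S E \<and> finite E \<and> card E = card S - 1 + k}"

definition convex_position :: "point set \<Rightarrow> bool" where
  "convex_position S \<longleftrightarrow> S \<subseteq> frontier (convex hull S)"

definition delta_C :: "nat \<Rightarrow> nat \<Rightarrow> ereal" where
  "delta_C n k = Sup {min_dilation S k | S. finite S \<and> card S = n \<and> convex_position S}"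

end

theory Submission
  imports Defs
begin

lemma jordan_sin:
  fixes x :: real
  assumes "0 \<le> x" "x \<le> pi/2"
  shows "2 * x / pi \<le> sin x"
proof -
  have cc: "concave_on {0..pi/2} sin"
    by (rule f''_le0_imp_concave[where f'=cos and f''="\<lambda>x. - sin x"])
       (auto intro!: derivative_eq_intros simp: sin_ge_zero)
  have "sin x \<ge> (sin (pi/2) - sin 0) / (pi/2 - 0) * (x - 0) + sin 0"
    using concave_onD_Icc'[OF cc, of x] assms by simp
  then show ?thesis by simp
qed

definition pt :: "nat \<Rightarrow> nat \<Rightarrow> point" where
  "pt n j = vector [cos (2*pi*real j/real n), sin (2*pi*real j/real n)]"

lemma dist_pt: "dist (pt n a) (pt n b) = 2 * \<bar>sin (pi * (real a - real b) / real n)\<bar>"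
proof -
  define A where "A = 2*pi*real a/real n"
  define B where "B = 2*pi*real b/real n"
  have h: "(A - B)/2 = pi * (real a - real b) / real n" unfolding A_def B_def by (cases "n = 0") (auto simp: field_simps)
  have "(dist (pt n a) (pt n b))^2 = (cos A - cos B)^2 + (sin A - sin B)^2"
    unfolding pt_def dist_norm A_def B_def
    by (simp add: norm_eq_sqrt_inner inner_vec_def sum_2 power2_eq_square)
  also have "\<dots> = 2 - 2 * cos (A - B)"
    by (simp add: cos_diff power2_eq_square algebra_simps)
  also have "\<dots> = (2 * sin ((A - B)/2))^2"
  proof -
    have "cos (A - B) = cos (2 * ((A-B)/2))" by (simp only: mult_2 field_sum_of_halves)
    then have "cos (A - B) = 1 - 2 * (sin ((A-B)/2))^2" using cos_double_sin by metis
    then show ?thesis by (simp add: power2_eq_square algebra_simps)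
  qed
  finally have "(dist (pt n a) (pt n b))^2 = (2 * sin ((A - B)/2))^2" .
  then have "dist (pt n a) (pt n b) = \<bar>2 * sin ((A - B)/2)\<bar>"
    by (metis abs_of_nonneg real_sqrt_abs zero_le_dist)
  then show ?thesis using h by (simp add: abs_mult)
qed

definition wrap :: "nat \<Rightarrow> int \<Rightarrow> int \<Rightarrow> int" where
  "wrap n a b = (if 2*(b-a) > int n then -1 else if 2*(b-a) < - int n then 1 else 0)"

definition disp :: "nat \<Rightarrow> int \<Rightarrow> int \<Rightarrow> int" where
  "disp n a b = (b - a) + int n * wrap n a b"

lemma disp_anti: "disp n a b = - disp n b a"
  unfolding disp_def wrap_def by auto

lemma disp_bound: "\<bar>a - b\<bar> < int n \<Longrightarrow> 2 * \<bar>disp n a b\<bar> \<le> int n"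
  unfolding disp_def wrap_def by (auto simp: abs_if split: if_splits)

lemma abs_sin_shift: "w \<in> {-1,0,1::int} \<Longrightarrow> \<bar>sin (x + pi * real_of_int w)\<bar> = \<bar>sin x\<bar>"
  by (auto simp: sin_periodic_pi sin_diff)

lemma dist_pt_disp:
  assumes "a < n" "b < n"
  shows "4 * \<bar>real_of_int (disp n (int a) (int b))\<bar> / real n \<le> dist (pt n a) (pt n b)"
proof -
  define D where "D = disp n (int a) (int b)"
  define W where "W = wrap n (int a) (int b)"
  have n0: "real n > 0" using assms by simp
  have W: "W \<in> {-1,0,1}" unfolding W_def wrap_def by auto
  have "real a - real b = - real_of_int D + real n * real_of_int W"
    unfolding D_def W_def disp_def by simp
  then have "pi * (real a - real b) / real n = - (pi * real_of_int D / real n) + pi * real_of_int W"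
    using n0 by (simp add: field_simps) (metis distrib_left)
  then have e1: "\<bar>sin (pi * (real a - real b) / real n)\<bar> = \<bar>sin (pi * real_of_int D / real n)\<bar>"
    using abs_sin_shift[OF W, of "- (pi * real_of_int D / real n)"] by simp
  have b2: "2 * \<bar>D\<bar> \<le> int n" unfolding D_def using assms by (intro disp_bound) simp
  define x where "x = pi * \<bar>real_of_int D\<bar> / real n"
  have x0: "0 \<le> x" unfolding x_def using n0 by simp
  have x1: "x \<le> pi/2"
  proof -
    have "2 * \<bar>real_of_int D\<bar> \<le> real n" using b2 by linarith
    then show ?thesis unfolding x_def using n0 by (simp add: field_simps)
  qed
  have e2: "\<bar>sin (pi * real_of_int D / real n)\<bar> = sin x"
  proof (cases "D \<ge> 0")
    case True
    then have "pi * real_of_int D / real n = x" unfolding x_def by simp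
    then show ?thesis using x0 x1 by (simp add: sin_ge_zero)
  next
    case False
    then have "pi * real_of_int D / real n = - x" unfolding x_def by simp
    then show ?thesis using x0 x1 by (simp add: sin_ge_zero)
  qed
  have "2 * x / pi \<le> sin x" by (rule jordan_sin[OF x0 x1])
  then have "4 * \<bar>real_of_int D\<bar> / real n \<le> 2 * sin x"
    unfolding x_def using n0 by (simp add: field_simps)
  then show ?thesis using dist_pt e1 e2 unfolding D_def by simp
qed

fun wk :: "point set set \<Rightarrow> point list \<Rightarrow> bool" where
  "wk E [] = True"
| "wk E [x] = True"
| "wk E (x # y # xs) = ({x, y} \<in> E \<and> wk E (y # xs))"

lemma wk_iff: "wk E xs \<longleftrightarrow> (\<forall>i < length xs - 1. {xs ! i, xs ! Suc i} \<in> E)"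
proof (induction E xs rule: wk.induct)
  case (3 E x y xs)
  then show ?case by (simp add: All_less_Suc2)
qed simp_all

lemma is_walk_wk: "is_walk E u v xs \<longleftrightarrow> xs \<noteq> [] \<and> hd xs = u \<and> last xs = v \<and> wk E xs"
  unfolding is_walk_def wk_iff by simp

lemma wk_append: "wk E (xs @ y # ys) \<longleftrightarrow> wk E (xs @ [y]) \<and> wk E (y # ys)"
proof (induction xs)
  case Nil
  then show ?case by simp
next
  case (Cons a xs)
  then show ?case by (cases xs) auto
qed

lemma wk_rev: "wk E (rev xs) \<longleftrightarrow> wk E xs"
proof (induction xs rule: wk.induct)
  case (3 E x y xs)
  have "rev (x # y # xs) = rev xs @ y # [x]" by simp
  then show ?case using 3 wk_append[of E "rev xs" y "[x]"] by (auto simp: insert_commute)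
qed simp_all

lemma walk_rev: "is_walk E u v xs \<Longrightarrow> is_walk E v u (rev xs)"
  unfolding is_walk_wk by (auto simp: wk_rev hd_rev last_rev)

lemma walk_concat: "is_walk E u v xs \<Longrightarrow> is_walk E v w ys \<Longrightarrow> is_walk E u w (xs @ tl ys)"
proof -
  assume a: "is_walk E u v xs" "is_walk E v w ys"
  then obtain ys' where ys: "ys = v # ys'" unfolding is_walk_wk by (cases ys) auto
  obtain xs' where xs: "xs = xs' @ [v]" using a unfolding is_walk_wk by (metis append_butlast_last_id)
  have "wk E (xs' @ v # ys')" using a wk_append[of E xs' v ys'] unfolding is_walk_wk xs ys by simp
  then show ?thesis using a unfolding is_walk_wk xs ys
    by (cases ys') (auto simp: hd_append)
qed

lemma wk_remove: "wk E xs \<Longrightarrow> l \<notin> set xs \<Longrightarrow> wk (E - {{l, m}}) xs"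
  by (induction E xs rule: wk.induct) auto

lemma bypass:
  assumes inc: "{e \<in> E. l \<in> e} = {{l, m}}" and lm: "l \<noteq> m"
  shows "is_walk E x y xs \<Longrightarrow> x \<noteq> l \<Longrightarrow> y \<noteq> l \<Longrightarrow> \<exists>ys. is_walk (E - {{l, m}}) x y ys"
proof (induction "length xs" arbitrary: xs rule: less_induct)
  case less
  show ?case
  proof (cases "l \<in> set xs")
    case False
    then show ?thesis using less.prems wk_remove unfolding is_walk_wk by blast
  next
    case True
    then obtain as bs where xs: "xs = as @ l # bs" by (meson split_list)
    have "as \<noteq> []" using less.prems xs unfolding is_walk_wk by auto
    then obtain as' a where as: "as = as' @ [a]" by (metis append_butlast_last_id)
    have "bs \<noteq> []" using less.prems xs unfolding is_walk_wk by auto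
    then obtain b bs' where bs: "bs = b # bs'" by (cases bs) auto
    have w: "wk E (as' @ a # l # b # bs')" using less.prems xs as bs unfolding is_walk_wk by simp
    then have w1: "wk E (as' @ [a])" and w2: "{a, l} \<in> E" and w3: "{l, b} \<in> E" and w4: "wk E (b # bs')"
      using wk_append[of E as' a "l # b # bs'"] by auto
    have "{a, l} \<in> {e \<in> E. l \<in> e}" using w2 by simp
    then have "{a, l} = {l, m}" unfolding inc by simp
    then have am: "a = m" using lm by (metis doubleton_eq_iff)
    have "{l, b} \<in> {e \<in> E. l \<in> e}" using w3 by simp
    then have "{l, b} = {l, m}" unfolding inc by simp
    then have bm: "b = m" using lm by (metis doubleton_eq_iff)
    define ys where "ys = as' @ m # bs'"
    have "wk E ys" unfolding ys_def using wk_append[of E as' m bs'] w1 w4 am bm by simp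
    moreover have "hd ys = x"
      using less.prems unfolding is_walk_wk ys_def xs as bs am by (cases as') auto
    moreover have "last ys = y"
      using less.prems unfolding is_walk_wk ys_def xs as bs bm by (cases bs') auto
    ultimately have "is_walk E x y ys" unfolding is_walk_wk ys_def by simp
    moreover have "length ys < length xs" unfolding ys_def xs as bs by simp
    ultimately show ?thesis using less by blast
  qed
qed

lemma c1: "finite E \<Longrightarrow> card {e\<in>E. P e} = (\<Sum>e\<in>E. if P e then 1 else 0)"
  by (simp add: sum.If_cases Collect_conj_eq Int_commute Collect_mem_eq)
lemma degree_sum:
  assumes "finite V" "graph_edges V E"
  shows "(\<Sum>x\<in>V. card {e\<in>E. x \<in> e}) = 2 * card E"
proof -
  have fE: "finite E"
    using assms unfolding graph_edges_def
    by (rule_tac finite_subset[of _ "Pow V"]) auto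
  have "(\<Sum>x\<in>V. card {e\<in>E. x \<in> e}) = (\<Sum>x\<in>V. \<Sum>e\<in>E. if x \<in> e then 1 else 0)"
    using fE by (intro sum.cong refl c1)
  also have "\<dots> = (\<Sum>e\<in>E. \<Sum>x\<in>V. if x \<in> e then 1 else 0)" by (rule sum.swap)
  also have "\<dots> = (\<Sum>e\<in>E. card {x\<in>V. x \<in> e})"
    using assms(1) by (intro sum.cong refl c1[symmetric])
  also have "\<dots> = (\<Sum>e\<in>E. 2)"
  proof (rule sum.cong)
    fix e assume "e \<in> E"
    then obtain u v where "e = {u, v}" "u \<in> V" "v \<in> V" "u \<noteq> v"
      using assms unfolding graph_edges_def by blast
    then have "{x\<in>V. x \<in> e} = {u, v}" by auto
    then show "card {x\<in>V. x \<in> e} = 2" using \<open>u \<noteq> v\<close> by simp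
  qed simp
  finally show ?thesis by simp
qed

lemma tree_potential:
  fixes f :: "point \<Rightarrow> point \<Rightarrow> int"
  assumes anti: "\<And>a b. f a b = - f b a"
  shows "finite V \<Longrightarrow> graph_edges V E \<Longrightarrow> card E + 1 \<le> card V \<Longrightarrow>
    (\<forall>x\<in>V. \<forall>y\<in>V. \<exists>xs. is_walk E x y xs) \<Longrightarrow>
    \<exists>\<psi>. \<forall>a b. {a, b} \<in> E \<longrightarrow> f a b = \<psi> b - \<psi> a"
proof (induction "card V" arbitrary: V E rule: less_induct)
  case less
  note fV = less.prems(1) and ge = less.prems(2) and cE = less.prems(3) and conn = less.prems(4)
  show ?case
  proof (cases "E = {}")
    case True
    then show ?thesis by auto
  next
    case False
    then obtain e0 where "e0 \<in> E" by blast
    then obtain u v where uv: "u \<in> V" "v \<in> V" "u \<noteq> v"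
      using ge unfolding graph_edges_def by blast
    have fE: "finite E"
      using ge fV unfolding graph_edges_def
      by (rule_tac finite_subset[of _ "Pow V"]) auto
    have deg1: "card {e\<in>E. x \<in> e} \<ge> 1" if x: "x \<in> V" for x
    proof -
      obtain y where y: "y \<in> V" "y \<noteq> x" using uv by metis
      obtain xs where xs: "is_walk E x y xs" using conn x y by blast
      then obtain z zs where zs: "xs = z # zs" unfolding is_walk_def by (cases xs) auto
      have "zs \<noteq> []" using xs y(2) zs unfolding is_walk_def by auto
      then have "length xs \<ge> 2" using zs by (cases zs) auto
      then have "{xs ! 0, xs ! Suc 0} \<in> E" using xs unfolding is_walk_def by auto
      moreover have "xs ! 0 = x" using xs unfolding is_walk_def by (metis hd_conv_nth)
      ultimately have "{e\<in>E. x \<in> e} \<noteq> {}" by blast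
      then show ?thesis using fE by (simp add: Suc_leI card_gt_0_iff)
    qed
    have "\<exists>l\<in>V. card {e\<in>E. l \<in> e} \<le> 1"
    proof (rule ccontr)
      assume "\<not> ?thesis"
      then have "(\<Sum>x\<in>V. (2::nat)) \<le> (\<Sum>x\<in>V. card {e\<in>E. x \<in> e})"
        by (intro sum_mono) auto
      then show False using degree_sum[OF fV ge] cE by simp
    qed
    then obtain l where l: "l \<in> V" "card {e\<in>E. l \<in> e} = 1" using deg1 by (meson le_antisym)
    then obtain e1 where e1: "{e\<in>E. l \<in> e} = {e1}" by (meson card_1_singletonE)
    then have "e1 \<in> E" "l \<in> e1" by auto
    then obtain m where m: "e1 = {l, m}" "l \<noteq> m" "m \<in> V"
      using ge unfolding graph_edges_def by blast
    define V' where "V' = V - {l}"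
    define E' where "E' = E - {{l, m}}"
    have inc: "{e\<in>E. l \<in> e} = {{l, m}}" using e1 m by simp
    have ge': "graph_edges V' E'"
      unfolding graph_edges_def
    proof
      fix e assume "e \<in> E'"
      then have "e \<in> E" "e \<noteq> {l, m}" unfolding E'_def by auto
      have "l \<notin> e"
      proof
        assume "l \<in> e"
        then have "e \<in> {e \<in> E. l \<in> e}" using \<open>e \<in> E\<close> by simp
        then show False using \<open>e \<noteq> {l, m}\<close> unfolding inc by simp
      qed
      then show "e \<in> {{u, v} |u v. u \<in> V' \<and> v \<in> V' \<and> u \<noteq> v}"
        using \<open>e \<in> E\<close> ge unfolding graph_edges_def V'_def by blast
    qed
    have "{l, m} \<in> {e \<in> E. l \<in> e}" unfolding inc by simp
    then have "{l, m} \<in> E" by simp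
    then have cE': "card E' + 1 \<le> card V'"
    proof -
      have "card E' = card E - 1" unfolding E'_def using \<open>{l, m} \<in> E\<close> fE by simp
      moreover have "card V' = card V - 1" unfolding V'_def using l(1) fV by simp
      moreover have "card E \<ge> 1" using \<open>{l, m} \<in> E\<close> fE by (metis One_nat_def Suc_leI card_gt_0_iff empty_iff)
      ultimately show ?thesis using cE by simp
    qed
    have conn': "\<forall>x\<in>V'. \<forall>y\<in>V'. \<exists>xs. is_walk E' x y xs"
    proof (intro ballI)
      fix x y assume "x \<in> V'" "y \<in> V'"
      then obtain xs where "is_walk E x y xs" "x \<noteq> l" "y \<noteq> l" using conn unfolding V'_def by blast
      then show "\<exists>xs. is_walk E' x y xs" unfolding E'_def using bypass[OF inc m(2)] by blast
    qed
    have "card V' < card V" unfolding V'_def using fV l(1) by (meson card_Diff1_less)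
    then obtain \<psi> where \<psi>: "\<forall>a b. {a, b} \<in> E' \<longrightarrow> f a b = \<psi> b - \<psi> a"
      using less.hyps[of V' E'] fV ge' cE' conn' unfolding V'_def by auto
    define \<phi> where "\<phi> = \<psi>(l := \<psi> m + f m l)"
    have "\<forall>a b. {a, b} \<in> E \<longrightarrow> f a b = \<phi> b - \<phi> a"
    proof (intro allI impI)
      fix a b assume ab: "{a, b} \<in> E"
      show "f a b = \<phi> b - \<phi> a"
      proof (cases "{a, b} = {l, m}")
        case True
        then have "(a = l \<and> b = m) \<or> (a = m \<and> b = l)" by (metis doubleton_eq_iff)
        then show ?thesis unfolding \<phi>_def using m(2) anti[of l m] by auto
      next
        case False
        have "l \<notin> {a, b}"
        proof
          assume "l \<in> {a, b}"
          then have "{a, b} \<in> {e \<in> E. l \<in> e}" using ab by simp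
          then show False using False unfolding inc by simp
        qed
        moreover have "{a, b} \<in> E'" using ab False unfolding E'_def by simp
        ultimately show ?thesis using \<psi> unfolding \<phi>_def by auto
      qed
    qed
    then show ?thesis by blast
  qed
qed

lemma disp_zero: "\<bar>a - b\<bar> < int n \<Longrightarrow> disp n a b = 0 \<Longrightarrow> a = b"
  unfolding disp_def wrap_def by (auto split: if_splits)

lemma pt_inj: assumes "a < n" "b < n" "pt n a = pt n b" shows "a = b"
proof -
  have "4 * \<bar>real_of_int (disp n (int a) (int b))\<bar> / real n \<le> 0"
    using dist_pt_disp[OF assms(1,2)] assms(3) by simp
  moreover have "real n > 0" using assms(1) by simp
  ultimately have "\<bar>real_of_int (disp n (int a) (int b))\<bar> \<le> 0"
    by (simp add: divide_le_0_iff)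
  then have "disp n (int a) (int b) = 0" by simp
  then show ?thesis using disp_zero[of "int a" "int b" n] assms(1,2) by simp
qed

lemma norm_pt: "norm (pt n j) = 1"
  unfolding pt_def by (simp add: norm_eq_sqrt_inner inner_vec_def sum_2 power2_eq_square[symmetric])

lemma dist_pt_next:
  assumes "k < n" "1 < n"
  shows "dist (pt n k) (pt n (Suc k mod n)) = 2 * sin (pi / real n)"
proof -
  have s0: "sin (pi / real n) \<ge> 0" using assms by (intro sin_ge_zero) (auto simp: field_simps)
  show ?thesis
  proof (cases "Suc k < n")
    case True
    then have "pi * (real k - real (Suc k mod n)) / real n = - (pi / real n)" by (simp add: field_simps)
    then show ?thesis using s0 by (simp add: dist_pt)
  next
    case False
    then have k: "Suc k = n" using assms by simp
    then have "Suc k mod n = 0" by simp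
    moreover have "pi * (real k - 0) / real n = pi - pi / real n"
      using k assms by (simp add: field_simps flip: k)
    ultimately show ?thesis using s0 by (simp add: dist_pt)
  qed
qed

lemma convex_position_pt: "convex_position (pt n ` {..<n})"
  unfolding convex_position_def
proof
  fix x assume x: "x \<in> pt n ` {..<n}"
  have sub: "pt n ` {..<n} \<subseteq> cball 0 1"
  proof
    fix y assume "y \<in> pt n ` {..<n}"
    then obtain j where "y = pt n j" by blast
    then show "y \<in> cball 0 1" by (simp add: mem_cball_0 norm_pt)
  qed
  have hc: "convex hull (pt n ` {..<n}) \<subseteq> cball 0 1"
    by (rule hull_minimal[where S=convex, OF sub convex_cball])
  have xh: "x \<in> convex hull (pt n ` {..<n})" using hull_inc[OF x] .
  have c: "x \<in> closure (convex hull (pt n ` {..<n}))" using closure_subset xh by (rule subsetD)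
  have nx: "norm x = 1" using x norm_pt by auto
  have i: "x \<notin> interior (convex hull (pt n ` {..<n}))"
  proof
    assume "x \<in> interior (convex hull (pt n ` {..<n}))"
    then have "x \<in> interior (cball (0::point) 1)" using interior_mono[OF hc] by (rule subsetD[rotated])
    then have "norm x < 1" by (simp add: mem_ball_0)
    then show False using nx by simp
  qed
  show "x \<in> frontier (convex hull (pt n ` {..<n}))" unfolding frontier_def using c i by (rule DiffI)
qed

lemma telescope_disp:
  fixes g :: "nat \<Rightarrow> int"
  shows "(\<Sum>i<m. disp n (g i) (g (Suc i))) = g m - g 0 + int n * (\<Sum>i<m. wrap n (g i) (g (Suc i)))"
  unfolding disp_def by (simp add: sum.distrib sum_distrib_left sum_lessThan_telescope)

lemma walk_pot:
  fixes \<psi> :: "point \<Rightarrow> int"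
  assumes "is_walk E u v xs" "\<forall>a b. {a, b} \<in> E \<longrightarrow> F a b = \<psi> b - \<psi> a"
  shows "(\<Sum>i<length xs - 1. F (xs ! i) (xs ! Suc i)) = \<psi> v - \<psi> u"
proof -
  have "(\<Sum>i<length xs - 1. F (xs ! i) (xs ! Suc i)) = (\<Sum>i<length xs - 1. \<psi> (xs ! Suc i) - \<psi> (xs ! i))"
    using assms unfolding is_walk_def by (intro sum.cong) auto
  also have "\<dots> = \<psi> (xs ! (length xs - 1)) - \<psi> (xs ! 0)" by (rule sum_lessThan_telescope)
  also have "\<dots> = \<psi> v - \<psi> u" using assms(1) unfolding is_walk_def by (metis hd_conv_nth last_conv_nth One_nat_def)
  finally show ?thesis .
qed

lemma walk_in_set:
  assumes "graph_edges S E" "is_walk E u v xs" "v \<in> S" "i < length xs"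
  shows "xs ! i \<in> S"
proof (cases "i < length xs - 1")
  case True
  then have "{xs ! i, xs ! Suc i} \<in> E" using assms(2) unfolding is_walk_def by auto
  then show ?thesis using assms(1) unfolding graph_edges_def by (auto simp: doubleton_eq_iff)
next
  case False
  then have "i = length xs - 1" using assms(4) by simp
  then show ?thesis using assms(2,3) unfolding is_walk_def by (metis last_conv_nth One_nat_def)
qed

lemma ediv: assumes "ereal c \<le> g" "0 < d" shows "ereal (c/d) \<le> g / ereal d"
  using assms by (cases g) (auto simp: divide_right_mono)

lemma int_one: fixes M :: int and n :: nat
  assumes "\<bar>real_of_int (1 + int n * M)\<bar> < real n - 1"
  shows "M = 0"
proof (rule ccontr)
  assume "M \<noteq> 0"
  then consider "M \<ge> 1" | "M \<le> -1" by linarith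
  then show False
  proof cases
    case 1
    then have "int n * M \<ge> int n * 1" by (intro mult_left_mono) auto
    then have "real_of_int (int n * M) \<ge> real n" by (metis mult.right_neutral of_int_le_iff of_int_of_nat_eq)
    then show False using assms by simp
  next
    case 2
    then have "int n * M \<le> int n * (-1)" by (intro mult_left_mono) auto
    then have "real_of_int (int n * M) \<le> - real n" by (metis mult_minus1_right of_int_le_iff of_int_minus of_int_of_nat_eq)
    then show False using assms by simp
  qed
qed

lemma key_walks:
  fixes E :: "point set set"
  assumes n1: "1 < n" and ge: "graph_edges (pt n ` {..<n}) E" and cE: "card E = n - 1"
  shows "\<exists>k<n. \<forall>xs. is_walk E (pt n k) (pt n (Suc k mod n)) xs \<longrightarrow> 4 - 2 * sin (pi / real n) \<le> walk_length xs"
proof (rule ccontr)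
  define S where "S = pt n ` {..<n}"
  define s where "s = 2 * sin (pi / real n)"
  have npos: "real n > 0" using n1 by simp
  have jord: "2 / real n \<le> sin (pi / real n)"
  proof -
    have "2 * (pi / real n) / pi \<le> sin (pi / real n)"
      using n1 by (intro jordan_sin) (auto simp: field_simps)
    then show ?thesis by simp
  qed
  have finS: "finite S" unfolding S_def by simp
  have inj: "inj_on (pt n) {..<n}" by (intro inj_onI pt_inj) auto
  have cardS: "card S = n" unfolding S_def using inj by (simp add: card_image)
  assume "\<not> ?thesis"
  then have "\<forall>k\<in>{..<n}. \<exists>xs. is_walk E (pt n k) (pt n (Suc k mod n)) xs \<and> walk_length xs < 4 - s"
    unfolding s_def by (auto simp: not_le)
  then have "\<exists>W. \<forall>k\<in>{..<n}. is_walk E (pt n k) (pt n (Suc k mod n)) (W k) \<and> walk_length (W k) < 4 - s"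
    by (rule bchoice)
  then obtain W where W: "\<forall>k\<in>{..<n}. is_walk E (pt n k) (pt n (Suc k mod n)) (W k) \<and> walk_length (W k) < 4 - s"
    by blast
  define idx where "idx x = (THE j. j < n \<and> pt n j = x)" for x
  have idx_pt: "idx (pt n j) = j" if "j < n" for j
    unfolding idx_def using that by (rule_tac the_equality) (auto dest: pt_inj)
  have idx_S: "idx x < n \<and> pt n (idx x) = x" if "x \<in> S" for x
    using that idx_pt unfolding S_def by auto
  define F where "F x y = disp n (int (idx x)) (int (idx y))" for x y
  have antiF: "\<And>a b. F a b = - F b a" unfolding F_def using disp_anti by blast
  have conn0: "\<exists>xs. is_walk E (pt n 0) (pt n j) xs" if "j < n" for j
    using that
  proof (induction j)
    case 0
    show ?case by (rule exI[of _ "[pt n 0]"]) (simp add: is_walk_def)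
  next
    case (Suc j)
    then obtain xs where "is_walk E (pt n 0) (pt n j) xs" by auto
    moreover have "is_walk E (pt n j) (pt n (Suc j)) (W j)"
    proof -
      have "j \<in> {..<n}" using Suc.prems by simp
      then have "is_walk E (pt n j) (pt n (Suc j mod n)) (W j)" using W by blast
      moreover have "Suc j mod n = Suc j" using Suc.prems by simp
      ultimately show ?thesis by simp
    qed
    ultimately show ?case using walk_concat by blast
  qed
  have conn: "\<forall>x\<in>S. \<forall>y\<in>S. \<exists>xs. is_walk E x y xs"
  proof (intro ballI)
    fix x y assume "x \<in> S" "y \<in> S"
    then obtain a b where ab: "a < n" "b < n" "x = pt n a" "y = pt n b" unfolding S_def by auto
    obtain xs where "is_walk E (pt n 0) (pt n a) xs" using conn0 ab by blast
    then have "is_walk E (pt n a) (pt n 0) (rev xs)" by (rule walk_rev)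
    moreover obtain ys where "is_walk E (pt n 0) (pt n b) ys" using conn0 ab by blast
    ultimately show "\<exists>xs. is_walk E x y xs" using walk_concat ab by blast
  qed
  have "card E + 1 \<le> card S" using cE cardS n1 by simp
  then obtain \<psi> where \<psi>: "\<forall>a b. {a, b} \<in> E \<longrightarrow> F a b = \<psi> b - \<psi> a"
    using tree_potential[of F S E, OF antiF finS ge[folded S_def] _ conn] by blast
  have step: "\<psi> (pt n (Suc k mod n)) - \<psi> (pt n k) = 1" if k: "k < n" for k
  proof -
    define xs where "xs = W k"
    define m where "m = length xs - 1"
    have wk: "is_walk E (pt n k) (pt n (Suc k mod n)) xs" and wl: "walk_length xs < 4 - s"
      using W k unfolding xs_def by auto
    have vS: "pt n (Suc k mod n) \<in> S" unfolding S_def using n1 by simp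
    have inS: "xs ! i \<in> S" if "i < length xs" for i
      using walk_in_set[OF ge[folded S_def] wk vS that] .
    have ne: "xs \<noteq> []" using wk unfolding is_walk_def by simp
    define g where "g i = int (idx (xs ! i))" for i
    define \<delta> where "\<delta> = (\<Sum>i<m. F (xs ! i) (xs ! Suc i))"
    have e1: "\<delta> = \<psi> (pt n (Suc k mod n)) - \<psi> (pt n k)"
      unfolding \<delta>_def m_def using walk_pot[OF wk \<psi>] .
    have "\<delta> = (\<Sum>i<m. disp n (g i) (g (Suc i)))" unfolding \<delta>_def F_def g_def by simp
    also have "\<dots> = g m - g 0 + int n * (\<Sum>i<m. wrap n (g i) (g (Suc i)))" by (rule telescope_disp)
    finally have e2: "\<delta> = g m - g 0 + int n * (\<Sum>i<m. wrap n (g i) (g (Suc i)))" .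
    have gm: "g m = int (Suc k mod n)"
    proof -
      have "xs ! m = pt n (Suc k mod n)" using wk ne unfolding is_walk_def m_def by (metis last_conv_nth)
      moreover have "Suc k mod n < n" using n1 by simp
      ultimately show ?thesis unfolding g_def using idx_pt by simp
    qed
    have g0: "g 0 = int k"
      unfolding g_def using wk ne k idx_pt unfolding is_walk_def by (metis hd_conv_nth)
    have e3: "4 * \<bar>real_of_int \<delta>\<bar> / real n \<le> walk_length xs"
    proof -
      have "4 * \<bar>real_of_int \<delta>\<bar> / real n = 4 / real n * \<bar>\<Sum>i<m. real_of_int (F (xs ! i) (xs ! Suc i))\<bar>"
        unfolding \<delta>_def by simp
      also have "\<dots> \<le> 4 / real n * (\<Sum>i<m. \<bar>real_of_int (F (xs ! i) (xs ! Suc i))\<bar>)"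
        using npos by (intro mult_left_mono sum_abs) auto
      also have "\<dots> = (\<Sum>i<m. 4 * \<bar>real_of_int (F (xs ! i) (xs ! Suc i))\<bar> / real n)"
        by (simp add: sum_distrib_left)
      also have "\<dots> \<le> (\<Sum>i<m. dist (xs ! i) (xs ! Suc i))"
      proof (rule sum_mono)
        fix i assume "i \<in> {..<m}"
        then have "i < length xs" "Suc i < length xs" unfolding m_def by auto
        then have a: "idx (xs ! i) < n" "pt n (idx (xs ! i)) = xs ! i"
          and b: "idx (xs ! Suc i) < n" "pt n (idx (xs ! Suc i)) = xs ! Suc i"
          using idx_S inS by auto
        show "4 * \<bar>real_of_int (F (xs ! i) (xs ! Suc i))\<bar> / real n \<le> dist (xs ! i) (xs ! Suc i)"
          using dist_pt_disp[OF a(1) b(1)] a(2) b(2) unfolding F_def by simp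
      qed
      also have "\<dots> = walk_length xs" unfolding walk_length_def m_def by simp
      finally show ?thesis .
    qed
    have "4 * \<bar>real_of_int \<delta>\<bar> / real n < 4 - 4 / real n"
      using e3 wl jord unfolding s_def by linarith
    then have lt: "\<bar>real_of_int \<delta>\<bar> < real n - 1" using npos by (simp add: field_simps)
    obtain M where dM: "\<delta> = 1 + int n * M"
    proof (cases "Suc k < n")
      case True
      then show ?thesis using that[of "\<Sum>i<m. wrap n (g i) (g (Suc i))"] e2 gm g0 by simp
    next
      case False
      then have "Suc k = n" using k by simp
      then have "g m - g 0 = 1 - int n" using gm g0 by simp
      then show ?thesis using that[of "(\<Sum>i<m. wrap n (g i) (g (Suc i))) - 1"] e2
        by (simp add: algebra_simps)
    qed
    have "M = 0" using int_one[of n M] lt dM by simp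
    then show ?thesis using e1 dM by simp
  qed
  define h where "h j = \<psi> (pt n (j mod n))" for j
  have "(\<Sum>k<n. h (Suc k) - h k) = h n - h 0" by (rule sum_lessThan_telescope)
  also have "\<dots> = 0" unfolding h_def by simp
  finally have z: "(\<Sum>k<n. h (Suc k) - h k) = 0" .
  have "(\<Sum>k<n. h (Suc k) - h k) = (\<Sum>k<n. 1)"
    using step unfolding h_def by (intro sum.cong) auto
  then show False using z n1 by simp
qed

theorem corollary1:
  fixes n :: nat
  assumes "n > 1"
  shows "delta_C n 0 \<ge> ereal ((4 - 2 * sin (pi / real n)) / (2 * sin (pi / real n)))
    \<and> (4 - 2 * sin (pi / real n)) / (2 * sin (pi / real n)) \<ge> 2 * real n / pi - 1"
proof
  define S where "S = pt n ` {..<n}"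
  define s where "s = 2 * sin (pi / real n)"
  have npos: "real n > 0" using assms by simp
  have sp: "sin (pi / real n) > 0" using assms by (intro sin_gt_zero) (auto simp: field_simps)
  have finS: "finite S" unfolding S_def by simp
  have inj: "inj_on (pt n) {..<n}" by (intro inj_onI pt_inj) auto
  have cardS: "card S = n" unfolding S_def using inj by (simp add: card_image)
  have cvx: "convex_position S" unfolding S_def by (rule convex_position_pt)
  have dil: "ereal ((4 - s) / s) \<le> dilation S E" if E: "graph_edges S E" "card E = card S - 1 + 0" for E
  proof -
    obtain k where k: "k < n" and long: "\<forall>xs. is_walk E (pt n k) (pt n (Suc k mod n)) xs \<longrightarrow> 4 - s \<le> walk_length xs"
      using key_walks[of n E] assms E cardS unfolding S_def s_def by auto
    define u where "u = pt n k"
    define v where "v = pt n (Suc k mod n)"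
    have uS: "u \<in> S" "v \<in> S" unfolding u_def v_def S_def using k assms by auto
    have "k \<noteq> Suc k mod n"
    proof (cases "Suc k < n")
      case False
      then have "Suc k = n" using k by simp
      then show ?thesis using assms by auto
    qed simp
    then have uv: "u \<noteq> v" unfolding u_def v_def using pt_inj[of k n "Suc k mod n"] k assms by auto
    have gd: "ereal (4 - s) \<le> graph_dist E u v"
      unfolding graph_dist_def using long unfolding u_def v_def by (intro Inf_greatest) auto
    have du: "dist u v = s" unfolding u_def v_def s_def using dist_pt_next k assms by simp
    have "ereal ((4 - s) / s) \<le> graph_dist E u v / ereal (dist u v)"
      unfolding du using ediv[OF gd] sp unfolding s_def by simp
    also have "\<dots> \<le> dilation S E" unfolding dilation_def using uS uv by (intro Sup_upper) blast
    finally show ?thesis .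
  qed
  have "ereal ((4 - s) / s) \<le> min_dilation S 0"
    unfolding min_dilation_def using dil by (intro Inf_greatest) auto
  also have "\<dots> \<le> delta_C n 0"
    unfolding delta_C_def using finS cardS cvx by (intro Sup_upper) blast
  finally show "ereal ((4 - 2 * sin (pi / real n)) / (2 * sin (pi / real n))) \<le> delta_C n 0"
    unfolding s_def .
next
  have npos: "real n > 0" using assms by simp
  have sp: "sin (pi / real n) > 0" using assms by (intro sin_gt_zero) (auto simp: field_simps)
  have sl: "sin (pi / real n) \<le> pi / real n" using npos by (intro sin_x_le_x) simp
  have "2 * real n / pi \<le> 2 / sin (pi / real n)"
    using sl sp npos pi_gt_zero by (simp add: field_simps)
  moreover have "(4 - 2 * sin (pi / real n)) / (2 * sin (pi / real n)) = 2 / sin (pi / real n) - 1"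
    using sp by (simp add: field_simps)
  ultimately show "2 * real n / pi - 1 \<le> (4 - 2 * sin (pi / real n)) / (2 * sin (pi / real n))"
    by simp
qed

end
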